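(* Let $H$ be a Banach space and $S(t):H\to H$, $t\ge0$, a semigroup ($S(t+l)=S(t)\circ S(l)$, $S(0)=\mathrm{Id}$) which is dissipative and possesses a global attractor $\mathcal{A}$ in $H$. Assume that every trajectory $u(t)=S(t)u_0$ belongs to $C_{loc}(\mathbb{R}_+,H)$ and that the map $u_0\mapsto S(\cdot)u_0$ is continuous from $H$ to $C_{loc}(\mathbb{R}_+,H)$. Then every system $\{F_1,\dots,F_N\}$ of continuous functionals $F_i:H\to\mathbb{R}$ which is separating on the attractor $\mathcal{A}$ is asymptotically determining.
   Context: Dissipative means: there exist constants $C,\alpha>0$ and a monotone increasing function $Q$ such that $\|S(t)u_0\|_H\le Q(\|u_0\|_H)e^{-\alpha t}+C$ for all $u_0\in H$, $t\ge0$. A set $\mathcal{A}\subset H$ is a global attractor if it is compact, strictly invariant ($S(t)\mathcal{A}=\mathcal{A}$ for all $t\ge0$), and for every bounded $B\subset H$ and every neighbourhood $\mathcal{O}$ of $\mathcal{A}$ there is $T$ with $S(t)B\subset\mathcal{O}$ for $t\ge T$. A complete trajectory belonging to the attractor is a map $u:\mathbb{R}\to\mathcal{A}$ with $S(t)u(s)=u(t+s)$ for all $s\in\mathbb{R}$, $t\ge0$. A system $\{F_1,\dots,F_N\}$ is separating on $\mathcal{A}$ if for any two complete trajectories $u,v$ belonging to $\mathcal{A}$, $F_i(u(t))=F_i(v(t))$ for all $t\in\mathbb{R}$ and all $i$ implies $u\equiv v$. It is asymptotically determining if for any two trajectories $u(t)=S(t)u_0$, $v(t)=S(t)v_0$,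 $\lim_{t\to\infty}(F_i(u(t))-F_i(v(t)))=0$ for all $i$ implies $\lim_{t\to\infty}\|u(t)-v(t)\|_H=0$. *)

theory Defs
  imports "HOL-Analysis.Analysis"
begin

definition is_semigroup :: "(real \<Rightarrow> 'a \<Rightarrow> 'a) \<Rightarrow> bool" where
  "is_semigroup S \<longleftrightarrow> S 0 = id \<and>
     (\<forall>t l. t \<ge> 0 \<longrightarrow> l \<ge> 0 \<longrightarrow> S (t + l) = S t \<circ> S l)"

definition dissipative :: "(real \<Rightarrow> 'a::real_normed_vector \<Rightarrow> 'a) \<Rightarrow> bool" where
  "dissipative S \<longleftrightarrow> (\<exists>C \<alpha> (Q::real \<Rightarrow> real). C > 0 \<and> \<alpha> > 0 \<and> mono Q \<and>
     (\<forall>u0 t. t \<ge> 0 \<longrightarrow> norm (S t u0) \<le> Q (norm u0) * exp (- \<alpha> * t) + C))"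

definition global_attractor :: "(real \<Rightarrow> 'a::metric_space \<Rightarrow> 'a) \<Rightarrow> 'a set \<Rightarrow> bool" where
  "global_attractor S A \<longleftrightarrow> compact A \<and> (\<forall>t\<ge>0. S t ` A = A) \<and>
     (\<forall>B U. bounded B \<longrightarrow> open U \<longrightarrow> A \<subseteq> U \<longrightarrow>
        (\<exists>T. \<forall>t\<ge>T. S t ` B \<subseteq> U))"

definition trajectories_continuous :: "(real \<Rightarrow> 'a::metric_space \<Rightarrow> 'a) \<Rightarrow> bool" where
  "trajectories_continuous S \<longleftrightarrow> (\<forall>u0. continuous_on {0..} (\<lambda>t. S t u0))"

text \<open>Continuity of u0 \<mapsto> S(.)u0 from H into C_loc(R_+,H) (topology of uniform
  convergence on compact subsets of R_+, i.e. on every [0,T]).\<close>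
definition continuous_into_Cloc :: "(real \<Rightarrow> 'a::metric_space \<Rightarrow> 'a) \<Rightarrow> bool" where
  "continuous_into_Cloc S \<longleftrightarrow> (\<forall>u0 T \<epsilon>. \<epsilon> > 0 \<longrightarrow> (\<exists>\<delta>>0. \<forall>v0. dist v0 u0 < \<delta> \<longrightarrow>
      (\<forall>t\<in>{0..T}. dist (S t v0) (S t u0) < \<epsilon>)))"

definition complete_trajectory_in :: "(real \<Rightarrow> 'a \<Rightarrow> 'a) \<Rightarrow> 'a set \<Rightarrow> (real \<Rightarrow> 'a) \<Rightarrow> bool" where
  "complete_trajectory_in S A u \<longleftrightarrow> (\<forall>s. u s \<in> A) \<and>
     (\<forall>s t. t \<ge> 0 \<longrightarrow> S t (u s) = u (t + s))"

text \<open>The system F_1..F_N is indexed here by i < N.\<close>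
definition separating_on :: "(real \<Rightarrow> 'a \<Rightarrow> 'a) \<Rightarrow> 'a set \<Rightarrow> nat \<Rightarrow> (nat \<Rightarrow> 'a \<Rightarrow> real) \<Rightarrow> bool" where
  "separating_on S A N F \<longleftrightarrow> (\<forall>u v. complete_trajectory_in S A u \<longrightarrow> complete_trajectory_in S A v \<longrightarrow>
     (\<forall>t. \<forall>i<N. F i (u t) = F i (v t)) \<longrightarrow> u = v)"

definition asymptotically_determining :: "(real \<Rightarrow> 'a::real_normed_vector \<Rightarrow> 'a) \<Rightarrow> nat \<Rightarrow> (nat \<Rightarrow> 'a \<Rightarrow> real) \<Rightarrow> bool" where
  "asymptotically_determining S N F \<longleftrightarrow> (\<forall>u0 v0.
     (\<forall>i<N. ((\<lambda>t. F i (S t u0) - F i (S t v0)) \<longlongrightarrow> 0) at_top) \<longrightarrow>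
     ((\<lambda>t. norm (S t u0 - S t v0)) \<longlongrightarrow> 0) at_top)"

end

theory Submission imports Defs "HOL-Library.Diagonal_Subsequence" begin

lemma cont_S:
  assumes "continuous_into_Cloc S" "t \<ge> 0"
  shows "isCont (S t) x"
  unfolding continuous_at_eps_delta
proof (intro allI impI)
  fix e :: real assume "e > 0"
  then obtain d where "d > 0" "\<forall>v0. dist v0 x < d \<longrightarrow> (\<forall>s\<in>{0..t}. dist (S s v0) (S s x) < e)"
    using assms(1) unfolding continuous_into_Cloc_def by blast
  then show "\<exists>d>0. \<forall>y. dist y x < d \<longrightarrow> dist (S t y) (S t x) < e"
    using assms(2) by auto
qed

lemma near_A:
  assumes "global_attractor S A" "e > 0"
  shows "eventually (\<lambda>t. \<exists>a\<in>A. dist (S t x0) a < e) at_top"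
proof -
  let ?U = "\<Union>a\<in>A. ball a e"
  have "open ?U" by auto
  moreover have "A \<subseteq> ?U" using assms(2) by auto
  moreover have "bounded {x0}" by simp
  ultimately obtain T where "\<forall>t\<ge>T. S t ` {x0} \<subseteq> ?U"
    using assms(1) unfolding global_attractor_def by metis
  then show ?thesis unfolding eventually_at_top_linorder
    by (intro exI[of _ T]) (auto simp: dist_commute)
qed

lemma subseq_A:
  fixes S :: "real \<Rightarrow> 'a::real_normed_vector \<Rightarrow> 'a"
  assumes "global_attractor S A" "filterlim f at_top sequentially"
  shows "\<exists>r l. strict_mono r \<and> l \<in> A \<and> ((\<lambda>n. S (f n) x0) \<circ> r) \<longlonglongrightarrow> l"
proof -
  have cA: "compact A" using assms(1) unfolding global_attractor_def by blast
  let ?x = "\<lambda>n. S (f n) x0"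
  have ev: "eventually (\<lambda>n. \<exists>a\<in>A. dist (?x n) a < e) sequentially" if "e > 0" for e
    using filterlim_iff[THEN iffD1, OF assms(2), rule_format, OF near_A[OF assms(1) that]] .
  have ne: "A \<noteq> {}" using eventually_happens[OF ev[of 1]] by auto
  have "\<exists>a\<in>A. \<forall>b\<in>A. dist (?x n) a \<le> dist (?x n) b" for n
    by (rule continuous_attains_inf[OF cA ne]) (intro continuous_intros)
  then obtain a where a: "\<And>n. a n \<in> A" "\<And>n b. b \<in> A \<Longrightarrow> dist (?x n) (a n) \<le> dist (?x n) b"
    by metis
  have d0: "(\<lambda>n. dist (?x n) (a n)) \<longlonglongrightarrow> 0"
  proof (rule tendstoI)
    fix e :: real assume "e > 0"
    show "eventually (\<lambda>n. dist (dist (?x n) (a n)) 0 < e) sequentially"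
      using ev[OF \<open>e > 0\<close>] by eventually_elim (simp, meson a(2) le_less_trans)
  qed
  obtain r l where "l \<in> A" "strict_mono r" "(a \<circ> r) \<longlonglongrightarrow> l"
    using cA[unfolded compact_eq_seq_compact_metric seq_compact_def] a(1) by metis
  moreover have "((\<lambda>n. S (f n) x0) \<circ> r) \<longlonglongrightarrow> l"
  proof -
    have "(\<lambda>n. dist (?x (r n)) (a (r n))) \<longlonglongrightarrow> 0"
      using LIMSEQ_subseq_LIMSEQ[OF d0 \<open>strict_mono r\<close>] by (simp add: o_def)
    then have "(\<lambda>n. ?x (r n) - a (r n)) \<longlonglongrightarrow> 0"
      by (simp add: dist_norm tendsto_norm_zero_iff)
    from tendsto_add[OF this \<open>(a \<circ> r) \<longlonglongrightarrow> l\<close>[unfolded o_def]]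
    show ?thesis by (simp add: o_def)
  qed
  ultimately show ?thesis by blast
qed


lemma sg_comp:
  assumes "is_semigroup S" "x \<ge> 0" "y \<ge> 0"
  shows "S (x + y) z = S x (S y z)"
  using assms unfolding is_semigroup_def by auto

lemma fl_shift:
  fixes t :: "nat \<Rightarrow> real"
  assumes "\<And>n. t n \<ge> real n" "strict_mono s"
  shows "filterlim (\<lambda>n. t (s n) + c) at_top sequentially"
  unfolding filterlim_at_top eventually_sequentially
proof
  fix Z :: real
  show "\<exists>N. \<forall>n\<ge>N. Z \<le> t (s n) + c"
  proof (intro exI allI impI)
    fix n assume "nat \<lceil>Z - c\<rceil> \<le> n"
    then have "Z - c \<le> real n" by linarith
    also have "real n \<le> real (s n)" using seq_suble[OF assms(2)] by simp
    also have "\<dots> \<le> t (s n)" by (rule assms(1))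
    finally show "Z \<le> t (s n) + c" by simp
  qed
qed

lemma claimC:
  fixes t :: "nat \<Rightarrow> real"
  assumes sg: "is_semigroup S" and cl: "continuous_into_Cloc S"
    and fl: "filterlim (\<lambda>n. t (d n)) at_top sequentially"
    and lim: "(\<lambda>n. S (t (d n) - real k) x0) \<longlonglongrightarrow> a"
    and sk: "s + real k \<ge> 0"
  shows "(\<lambda>n. S (t (d n) + s) x0) \<longlonglongrightarrow> S (s + real k) a"
proof -
  have "(\<lambda>n. S (s + real k) (S (t (d n) - real k) x0)) \<longlonglongrightarrow> S (s + real k) a"
    by (rule isCont_tendsto_compose[OF cont_S[OF cl sk] lim])
  moreover have "eventually (\<lambda>n. real k \<le> t (d n)) sequentially"
    using fl unfolding filterlim_at_top by blast
  then have "eventually (\<lambda>n. S (s + real k) (S (t (d n) - real k) x0) = S (t (d n) + s) x0) sequentially"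
  proof eventually_elim
    case (elim n)
    have "S (s + real k) (S (t (d n) - real k) x0) = S ((s + real k) + (t (d n) - real k)) x0"
      using sg_comp[OF sg sk, of "t (d n) - real k" x0] elim by simp
    then show ?case by (simp add: algebra_simps)
  qed
  ultimately show ?thesis by (rule Lim_transform_eventually)
qed

theorem proposition2p3:
  fixes S :: "real \<Rightarrow> 'a::banach \<Rightarrow> 'a" and A :: "'a set"
    and N :: nat and F :: "nat \<Rightarrow> 'a \<Rightarrow> real"
  assumes "is_semigroup S"
    and "dissipative S"
    and "global_attractor S A"
    and "trajectories_continuous S"
    and "continuous_into_Cloc S"
    and "\<forall>i<N. continuous_on UNIV (F i)"
    and "separating_on S A N F"
  shows "asymptotically_determining S N F"
  unfolding asymptotically_determining_def
proof (intro allI impI)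
  note sg = assms(1) and ga = assms(3) and cl = assms(5)
  fix u0 v0
  assume Fh: "\<forall>i<N. ((\<lambda>t. F i (S t u0) - F i (S t v0)) \<longlongrightarrow> 0) at_top"
  show "((\<lambda>t. norm (S t u0 - S t v0)) \<longlongrightarrow> 0) at_top"
  proof (rule ccontr)
    assume "\<not> ?thesis"
    then obtain \<epsilon> :: real where "\<epsilon> > 0" and "\<not> eventually (\<lambda>t. norm (S t u0 - S t v0) < \<epsilon>) at_top"
      unfolding tendsto_iff by auto
    then have "\<forall>T. \<exists>t\<ge>T. norm (S t u0 - S t v0) \<ge> \<epsilon>"
      unfolding eventually_at_top_linorder by (meson not_le)
    then have "\<forall>n::nat. \<exists>t. t \<ge> real n \<and> norm (S t u0 - S t v0) \<ge> \<epsilon>" by blast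
    then obtain t where t: "\<And>n. t n \<ge> real n" "\<And>n. norm (S (t n) u0 - S (t n) v0) \<ge> \<epsilon>"
      by metis
    define P where "P = (\<lambda>(k::nat) (r::nat \<Rightarrow> nat). \<exists>a\<in>A. \<exists>b\<in>A.
       (\<lambda>n. S (t (r n) - real k) u0) \<longlonglongrightarrow> a \<and> (\<lambda>n. S (t (r n) - real k) v0) \<longlonglongrightarrow> b)"
    interpret subseqs P
    proof
      fix k s assume s: "strict_mono (s :: nat \<Rightarrow> nat)"
      obtain r1 a where r1: "strict_mono r1" "a \<in> A" "((\<lambda>n. S (t (s n) + - real k) u0) \<circ> r1) \<longlonglongrightarrow> a"
        using subseq_A[OF ga fl_shift[OF t(1) s]] by blast
      have s1: "strict_mono (s \<circ> r1)" using s r1(1) by (rule strict_mono_o)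
      obtain r2 b where r2: "strict_mono r2" "b \<in> A" "((\<lambda>n. S (t ((s \<circ> r1) n) + - real k) v0) \<circ> r2) \<longlonglongrightarrow> b"
        using subseq_A[OF ga fl_shift[OF t(1) s1]] by blast
      have "((\<lambda>n. S (t (s n) + - real k) u0) \<circ> r1 \<circ> r2) \<longlonglongrightarrow> a"
        by (rule LIMSEQ_subseq_LIMSEQ[OF r1(3) r2(1)])
      moreover have "strict_mono (r1 \<circ> r2)" using r1(1) r2(1) by (rule strict_mono_o)
      ultimately show "\<exists>r'. strict_mono r' \<and> P k (s \<circ> r')"
        using r1 r2 unfolding P_def
        by (intro exI[of _ "r1 \<circ> r2"]) (auto simp: o_def)
    qed
    define d where "d = diagseq"
    have dm: "strict_mono d" unfolding d_def by (rule subseq_diagseq)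
    have "P k d" for k
    proof -
      have "P k (diagseq \<circ> (+) (Suc k))"
        by (rule diagseq_holds) (auto simp: P_def o_def intro: LIMSEQ_subseq_LIMSEQ[unfolded o_def])
      then obtain a' b' where ab': "a' \<in> A" "b' \<in> A"
        "(\<lambda>n. S (t (diagseq (Suc k + n)) - real k) u0) \<longlonglongrightarrow> a'"
        "(\<lambda>n. S (t (diagseq (Suc k + n)) - real k) v0) \<longlonglongrightarrow> b'"
        unfolding P_def o_def by blast
      have "(\<lambda>n. S (t (diagseq n) - real k) u0) \<longlonglongrightarrow> a'"
        by (rule LIMSEQ_offset[where k="Suc k"]) (use ab'(3) in \<open>simp add: add.commute\<close>)
      moreover have "(\<lambda>n. S (t (diagseq n) - real k) v0) \<longlonglongrightarrow> b'"
        by (rule LIMSEQ_offset[where k="Suc k"]) (use ab'(4) in \<open>simp add: add.commute\<close>)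
      ultimately show ?thesis unfolding P_def d_def using ab'(1,2) by blast
    qed
    then obtain a b where ab: "\<And>k. a k \<in> A" "\<And>k. b k \<in> A"
      "\<And>k. (\<lambda>n. S (t (d n) - real k) u0) \<longlonglongrightarrow> a k"
      "\<And>k. (\<lambda>n. S (t (d n) - real k) v0) \<longlonglongrightarrow> b k"
      unfolding P_def by metis
    have fl: "filterlim (\<lambda>n. t (d n) + c) at_top sequentially" for c
      by (rule fl_shift[OF t(1) dm])
    have fl0: "filterlim (\<lambda>n. t (d n)) at_top sequentially" using fl[of 0] by simp
    define K where "K = (\<lambda>s::real. nat \<lceil>- s\<rceil>)"
    have K: "s + real (K s) \<ge> 0" for s unfolding K_def by linarith
    define U where "U = (\<lambda>s. S (s + real (K s)) (a (K s)))"
    define V where "V = (\<lambda>s. S (s + real (K s)) (b (K s)))"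
    have limU: "(\<lambda>n. S (t (d n) + s) u0) \<longlonglongrightarrow> U s" for s
      unfolding U_def by (rule claimC[where t=t and d=d, OF sg cl fl0 ab(3)[of "K s"] K[of s]])
    have limV: "(\<lambda>n. S (t (d n) + s) v0) \<longlonglongrightarrow> V s" for s
      unfolding V_def by (rule claimC[where t=t and d=d, OF sg cl fl0 ab(4)[of "K s"] K[of s]])
    have inA: "S \<tau> x \<in> A" if "x \<in> A" "\<tau> \<ge> 0" for x \<tau>
      using ga that unfolding global_attractor_def by blast
    have traj: "S \<tau> (W s) = W (\<tau> + s)"
      if "\<tau> \<ge> 0" and limW: "\<And>s. (\<lambda>n. S (t (d n) + s) x0) \<longlonglongrightarrow> W s" for \<tau> s W x0
    proof -
      have 1: "(\<lambda>n. S \<tau> (S (t (d n) + s) x0)) \<longlonglongrightarrow> S \<tau> (W s)"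
        by (rule isCont_tendsto_compose[OF cont_S[OF cl that(1)] limW])
      have "eventually (\<lambda>n. 0 \<le> t (d n) + s) sequentially"
        using fl[of s] unfolding filterlim_at_top by blast
      then have "eventually (\<lambda>n. S \<tau> (S (t (d n) + s) x0) = S (t (d n) + (\<tau> + s)) x0) sequentially"
      proof eventually_elim
        case (elim n)
        from sg_comp[OF sg that(1) elim, of x0] show ?case by (simp add: algebra_simps)
      qed
      from Lim_transform_eventually[OF 1 this] limW[of "\<tau> + s"]
      show ?thesis by (rule LIMSEQ_unique)
    qed
    have ctU: "complete_trajectory_in S A U"
      unfolding complete_trajectory_in_def
      using traj[OF _ limU] inA[OF ab(1) K] unfolding U_def by auto
    have ctV: "complete_trajectory_in S A V"
      unfolding complete_trajectory_in_def
      using traj[OF _ limV] inA[OF ab(2) K] unfolding V_def by auto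
    have FF: "F i (U s) = F i (V s)" if i: "i < N" for i s
    proof -
      have ci: "isCont (F i) x" for x
        using assms(6) i by (simp add: continuous_on_eq_continuous_at)
      have "(\<lambda>n. F i (S (t (d n) + s) u0) - F i (S (t (d n) + s) v0)) \<longlonglongrightarrow> F i (U s) - F i (V s)"
        by (intro tendsto_diff isCont_tendsto_compose[OF ci] limU limV)
      moreover have "(\<lambda>n. F i (S (t (d n) + s) u0) - F i (S (t (d n) + s) v0)) \<longlonglongrightarrow> 0"
        using filterlim_compose[OF Fh[rule_format, OF i] fl[of s]] .
      ultimately show ?thesis using LIMSEQ_unique by fastforce
    qed
    have "U = V" using assms(7) ctU ctV FF unfolding separating_on_def by blast
    have "(\<lambda>n. norm (S (t (d n)) u0 - S (t (d n)) v0)) \<longlonglongrightarrow> norm (U 0 - V 0)"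
      using tendsto_norm[OF tendsto_diff[OF limU[of 0] limV[of 0]]] by simp
    then have "\<epsilon> \<le> norm (U 0 - V 0)"
      by (rule tendsto_lowerbound) (use t(2) in auto)
    then show False using \<open>U = V\<close> \<open>\<epsilon> > 0\<close> by simp
  qed
qed

end
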